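(* Every $(K_4-e)$-design $(X,\mathcal B)$ of order $10$ contains a subdesign of order $6$; that is, there exist a $6$-element subset $Y\subseteq X$ and a subcollection $\mathcal B'\subseteq\mathcal B$ such that $(Y,\mathcal B')$ is a $(K_4-e)$-design of order $6$.
   Context: $K_4-e$ is the graph on four vertices $a,b,c,d$ with edges $ab,ac,ad,bc,bd$; it is denoted $[a,b,c-d]$. A $(K_4-e)$-design of order $v$ is a pair $(X,\mathcal B)$ where $X$ is a set of $v$ vertices and $\mathcal B$ is a collection of copies of $K_4-e$ (called blocks) with vertices in $X$ whose edge sets partition the edge set of the complete graph $K_v$ on $X$. *)

theory Defs
  imports Main
begin

text \<open>Edge set of the graph K4-e denoted [a,b,c-d]: vertices a,b,c,d (distinct),
  edges ab, ac, ad, bc, bd.\<close>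
definition k4e_edges :: "'a \<Rightarrow> 'a \<Rightarrow> 'a \<Rightarrow> 'a \<Rightarrow> 'a set set" where
  "k4e_edges a b c d = {{a,b},{a,c},{a,d},{b,c},{b,d}}"

definition is_k4e_block :: "'a set \<Rightarrow> 'a set set \<Rightarrow> bool" where
  "is_k4e_block X G \<longleftrightarrow> (\<exists>a b c d. a \<in> X \<and> b \<in> X \<and> c \<in> X \<and> d \<in> X \<and>
     distinct [a,b,c,d] \<and> G = k4e_edges a b c d)"

definition complete_edges :: "'a set \<Rightarrow> 'a set set" where
  "complete_edges X = {e. \<exists>x y. x \<in> X \<and> y \<in> X \<and> x \<noteq> y \<and> e = {x,y}}"

definition k4e_design :: "nat \<Rightarrow> 'a set \<Rightarrow> 'a set set set \<Rightarrow> bool" where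
  "k4e_design v X B \<longleftrightarrow> finite X \<and> card X = v \<and>
     (\<forall>G\<in>B. is_k4e_block X G) \<and>
     (\<forall>G1\<in>B. \<forall>G2\<in>B. G1 \<noteq> G2 \<longrightarrow> G1 \<inter> G2 = {}) \<and>
     \<Union>B = complete_edges X"

end

theory Submission imports Defs begin
definition deg :: "'a set set \<Rightarrow> 'a \<Rightarrow> nat" where "deg G v = card {e\<in>G. v\<in>e}"

lemma deg_k4e:
  assumes "distinct [a,b,c,d]"
  shows "deg (k4e_edges a b c d) v = (if v = a \<or> v = b then 3 else if v = c \<or> v = d then 2 else 0)"
proof -
  consider "v = a" | "v = b" | "v = c" | "v = d" | "v \<notin> {a,b,c,d}" by blast
  then show ?thesis
  proof cases
    case 1
    then have "{e\<in>k4e_edges a b c d. v\<in>e} = {{a,b},{a,c},{a,d}}" using assms by (auto simp: k4e_edges_def)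
    then show ?thesis using assms 1 by (auto simp: deg_def doubleton_eq_iff)
  next
    case 2
    then have "{e\<in>k4e_edges a b c d. v\<in>e} = {{a,b},{b,c},{b,d}}" using assms by (auto simp: k4e_edges_def)
    then show ?thesis using assms 2 by (auto simp: deg_def doubleton_eq_iff)
  next
    case 3
    then have "{e\<in>k4e_edges a b c d. v\<in>e} = {{a,c},{b,c}}" using assms by (auto simp: k4e_edges_def)
    then show ?thesis using assms 3 by (auto simp: deg_def doubleton_eq_iff)
  next
    case 4
    then have "{e\<in>k4e_edges a b c d. v\<in>e} = {{a,d},{b,d}}" using assms by (auto simp: k4e_edges_def)
    then show ?thesis using assms 4 by (auto simp: deg_def doubleton_eq_iff)
  next
    case 5
    have h: "{e\<in>k4e_edges a b c d. v\<in>e} = {}" using assms 5 by (auto simp: k4e_edges_def)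
    show ?thesis using assms 5 by (simp add: deg_def h)
  qed
qed

lemma card_filter_sum: "finite A \<Longrightarrow> card {x\<in>A. P x} = (\<Sum>x\<in>A. if P x then 1 else 0::nat)"
  by (simp add: sum.inter_filter[symmetric])

lemma k4e_finite: "finite (k4e_edges a b c d)" by (simp add: k4e_edges_def)

lemma deg_pos: "finite G \<Longrightarrow> e \<in> G \<Longrightarrow> v \<in> e \<Longrightarrow> deg G v \<noteq> 0"
  unfolding deg_def by (subst card_0_eq) auto

theorem lemma2p2:
  fixes X :: "'a set" and B :: "'a set set set"
  assumes "k4e_design 10 X B"
  shows "\<exists>Y B'. Y \<subseteq> X \<and> card Y = 6 \<and> B' \<subseteq> B \<and> k4e_design 6 Y B'"
proof -
  have finX: "finite X" and cX: "card X = 10" and blk: "\<And>G. G\<in>B \<Longrightarrow> is_k4e_block X G"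
    and disj: "\<And>G1 G2. G1\<in>B \<Longrightarrow> G2\<in>B \<Longrightarrow> G1 \<noteq> G2 \<Longrightarrow> G1 \<inter> G2 = {}"
    and un: "\<Union>B = complete_edges X" using assms unfolding k4e_design_def by auto
  have finCE: "finite (complete_edges X)"
    by (rule finite_subset[of _ "Pow X"]) (auto simp: complete_edges_def finX)
  have finB: "finite B"
    by (rule finite_subset[of _ "Pow (complete_edges X)"]) (use un finCE in auto)
  have finG: "\<And>G. G\<in>B \<Longrightarrow> finite G" using blk unfolding is_k4e_block_def by (metis k4e_finite)
  have degvals: "\<And>G v. G\<in>B \<Longrightarrow> deg G v = 0 \<or> deg G v = 2 \<or> deg G v = 3"
  proof -
    fix G v assume "G \<in> B"
    then obtain a b c d where "distinct [a,b,c,d]" "G = k4e_edges a b c d"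
      using blk unfolding is_k4e_block_def by blast
    then show "deg G v = 0 \<or> deg G v = 2 \<or> deg G v = 3" by (simp add: deg_k4e)
  qed
  have tot: "(\<Sum>G\<in>B. deg G v) = 9" if vX: "v \<in> X" for v
  proof -
    have "{e\<in>complete_edges X. v\<in>e} = (\<lambda>y. {v,y}) ` (X-{v})"
      using vX by (auto simp: complete_edges_def)
    moreover have "inj_on (\<lambda>y. {v,y}) (X-{v})" by (auto simp: inj_on_def doubleton_eq_iff)
    ultimately have "card {e\<in>complete_edges X. v\<in>e} = card (X - {v})"
      using card_image by metis
    then have "card {e\<in>complete_edges X. v\<in>e} = 9"
      using cX vX finX by (simp add: card_Diff_singleton)
    moreover have "{e\<in>complete_edges X. v\<in>e} = (\<Union>G\<in>B. {e\<in>G. v\<in>e})" using un by blast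
    moreover have "card (\<Union>G\<in>B. {e\<in>G. v\<in>e}) = (\<Sum>G\<in>B. card {e\<in>G. v\<in>e})"
      by (rule card_UN_disjoint) (use finB finG disj in auto)
    ultimately show ?thesis by (simp add: deg_def)
  qed
  define P where "P v = card {G\<in>B. deg G v = 3}" for v
  define Q where "Q v = card {G\<in>B. deg G v = 2}" for v
  have PQ: "3 * P v + 2 * Q v = 9" if "v \<in> X" for v
  proof -
    have "(\<Sum>G\<in>B. deg G v) = (\<Sum>G\<in>B. (if deg G v = 3 then 3 else 0) + (if deg G v = 2 then 2 else 0))"
      by (rule sum.cong) (use degvals in auto)
    also have "\<dots> = (\<Sum>G\<in>B. if deg G v = 3 then 3 else 0) + (\<Sum>G\<in>B. if deg G v = 2 then 2 else 0)"
      by (rule sum.distrib)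
    also have "(\<Sum>G\<in>B. if deg G v = 3 then 3 else 0) = (\<Sum>G\<in>{G\<in>B. deg G v = 3}. 3::nat)"
      by (rule sum.inter_filter[symmetric, OF finB])
    also have "(\<Sum>G\<in>B. if deg G v = 2 then 2 else 0) = (\<Sum>G\<in>{G\<in>B. deg G v = 2}. 2::nat)"
      by (rule sum.inter_filter[symmetric, OF finB])
    finally show ?thesis using tot[OF that] by (simp add: P_def Q_def)
  qed
  have apex: "card {v\<in>X. deg G v = 3} = 2 \<and> card {v\<in>X. deg G v = 2} = 2" if GB0: "G\<in>B" for G
  proof -
    obtain a b c d where ab: "a\<in>X" "b\<in>X" "c\<in>X" "d\<in>X" "distinct [a,b,c,d]" "G = k4e_edges a b c d"
      using blk[OF GB0] unfolding is_k4e_block_def by blast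
    have "{v\<in>X. deg G v = 3} = {a,b}" "{v\<in>X. deg G v = 2} = {c,d}"
      using ab by (auto simp: deg_k4e)
    then show ?thesis using ab by simp
  qed
  have sumP: "(\<Sum>v\<in>X. P v) = 2 * card B"
  proof -
    have "(\<Sum>v\<in>X. P v) = (\<Sum>v\<in>X. \<Sum>G\<in>B. if deg G v = 3 then 1 else 0)"
      unfolding P_def using finB by (simp add: card_filter_sum)
    also have "\<dots> = (\<Sum>G\<in>B. \<Sum>v\<in>X. if deg G v = 3 then 1 else 0)" by (rule sum.swap)
    also have "\<dots> = (\<Sum>G\<in>B. 2)"
      by (rule sum.cong) (use apex finX in \<open>auto simp: card_filter_sum[symmetric]\<close>)
    finally show ?thesis by simp
  qed
  have sumQ: "(\<Sum>v\<in>X. Q v) = 2 * card B"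
  proof -
    have "(\<Sum>v\<in>X. Q v) = (\<Sum>v\<in>X. \<Sum>G\<in>B. if deg G v = 2 then 1 else 0)"
      unfolding Q_def using finB by (simp add: card_filter_sum)
    also have "\<dots> = (\<Sum>G\<in>B. \<Sum>v\<in>X. if deg G v = 2 then 1 else 0)" by (rule sum.swap)
    also have "\<dots> = (\<Sum>G\<in>B. 2)"
      by (rule sum.cong) (use apex finX in \<open>auto simp: card_filter_sum[symmetric]\<close>)
    finally show ?thesis by simp
  qed
  have "(\<Sum>v\<in>X. 3 * P v + 2 * Q v) = (\<Sum>v\<in>X. 9::nat)" by (rule sum.cong) (use PQ in auto)
  then have "3 * (\<Sum>v\<in>X. P v) + 2 * (\<Sum>v\<in>X. Q v) = 90"
    by (simp add: sum.distrib sum_distrib_left cX)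
  then have sQ: "(\<Sum>v\<in>X. Q v) = 18" using sumP sumQ by simp
  have Qv: "Q v = 0 \<or> Q v = 3" if "v\<in>X" for v using PQ[OF that] by presburger
  define Y where "Y = {v\<in>X. Q v = 3}"
  define Z where "Z = {v\<in>X. Q v = 0}"
  have YX: "Y \<subseteq> X" by (auto simp: Y_def)
  have "(\<Sum>v\<in>X. Q v) = (\<Sum>v\<in>X. if Q v = 3 then 3 else 0)"
    by (rule sum.cong) (use Qv in auto)
  also have "\<dots> = (\<Sum>v\<in>Y. 3)" unfolding Y_def by (rule sum.inter_filter[symmetric, OF finX])
  finally have cY: "card Y = 6" using sQ by simp
  have XYZ: "X = Y \<union> Z" "Y \<inter> Z = {}" using Qv by (auto simp: Y_def Z_def) (metis less_not_refl)
  have finY: "finite Y" using YX finX finite_subset by blast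
  have finZ: "finite Z" using finX by (simp add: Z_def)
  have cZ: "card Z = 4" using card_Un_disjoint[OF finY finZ XYZ(2)] XYZ(1) cX cY by simp
  have Zno2: "deg G z \<noteq> 2" if "z \<in> Z" "G \<in> B" for z G
  proof
    assume "deg G z = 2"
    then have "G \<in> {G\<in>B. deg G z = 2}" using that by simp
    then have "Q z \<noteq> 0" unfolding Q_def using finB by (subst card_0_eq) auto
    then show False using that by (simp add: Z_def)
  qed
  have Z3: "deg G z = 3" if "z \<in> Z" "G \<in> B" "e \<in> G" "z \<in> e" for z G e
    using degvals[OF that(2), of z] deg_pos[OF finG[OF that(2)] that(3,4)] Zno2[OF that(1,2)] by auto
  have key: "\<exists>w\<in>Z. w \<noteq> z \<and> {z,w} \<in> G" if zZ: "z\<in>Z" and GB: "G\<in>B" and dG: "deg G z = 3" for z G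
  proof -
    define Bz where "Bz = {G\<in>B. deg G z = 3}"
    have zX: "z \<in> X" using zZ by (simp add: Z_def)
    have cBz: "card Bz = 3" using PQ[OF zX] zZ by (simp add: Bz_def P_def Z_def)
    define f where "f w = (SOME H. H\<in>B \<and> {z,w}\<in>H)" for w
    have fw: "f w \<in> B \<and> {z,w} \<in> f w" if "w \<in> Z - {z}" for w
    proof -
      have "{z,w} \<in> complete_edges X" using that zX by (auto simp: complete_edges_def Z_def)
      then have "\<exists>H. H\<in>B \<and> {z,w}\<in>H" using un by blast
      then show ?thesis unfolding f_def by (rule someI_ex)
    qed
    have sub: "f ` (Z - {z}) \<subseteq> Bz"
      using fw Z3[OF zZ] by (auto simp: Bz_def)
    have inj: "inj_on f (Z - {z})"
    proof (rule inj_onI)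
      fix w w' assume w: "w \<in> Z - {z}" and w': "w' \<in> Z - {z}" and eq: "f w = f w'"
      let ?H = "f w"
      have HB: "?H \<in> B" using fw[OF w] by simp
      obtain a b c d where ab: "distinct [a,b,c,d]" "?H = k4e_edges a b c d"
        using blk[OF HB] unfolding is_k4e_block_def by blast
      have "deg ?H w = 3" using Z3[of w ?H "{z,w}"] fw[OF w] w HB by auto
      moreover have "deg ?H w' = 3" using Z3[of w' ?H "{z,w'}"] fw[OF w'] w' HB eq by auto
      moreover have "deg ?H z = 3" using Z3[of z ?H "{z,w}"] fw[OF w] zZ HB by auto
      ultimately have "w \<in> {a,b}" "w' \<in> {a,b}" "z \<in> {a,b}"
        using ab by (auto simp: deg_k4e split: if_splits)
      then show "w = w'" using w w' by auto
    qed
    have "card (f ` (Z - {z})) = 3" using card_image[OF inj] cZ zZ finZ by simp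
    then have "f ` (Z - {z}) = Bz"
      using card_subset_eq[OF _ sub] finB cBz by (simp add: Bz_def)
    then have "G \<in> f ` (Z - {z})" using GB dG by (simp add: Bz_def)
    then obtain w where "w \<in> Z - {z}" "G = f w" by blast
    then show ?thesis using fw by auto
  qed
  define B' where "B' = {G\<in>B. \<Union>G \<subseteq> Y}"
  have inY: "\<Union>G \<subseteq> Y" if GB: "G\<in>B" and xy: "x\<in>Y" "y\<in>Y" "{x,y} \<in> G" for G x y
  proof -
    obtain a b c d where ab: "a\<in>X" "b\<in>X" "c\<in>X" "d\<in>X" "distinct [a,b,c,d]" "G = k4e_edges a b c d"
      using blk[OF GB] unfolding is_k4e_block_def by blast
    have cd: "c \<notin> Z" "d \<notin> Z" using Zno2[OF _ GB, of c] Zno2[OF _ GB, of d] ab by (auto simp: deg_k4e)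
    have "a \<notin> Z \<and> b \<notin> Z"
    proof (rule ccontr)
      assume "\<not> (a \<notin> Z \<and> b \<notin> Z)"
      then obtain u where u: "u \<in> {a,b}" "u \<in> Z" by blast
      then have "deg G u = 3" using ab by (auto simp: deg_k4e)
      from key[OF u(2) GB this] obtain w where w: "w\<in>Z" "w\<noteq>u" "{u,w}\<in>G" by blast
      have "deg G w = 3" using Z3[OF w(1) GB w(3)] by simp
      then have "w \<in> {a,b}" using ab by (auto simp: deg_k4e split: if_splits)
      then have "a \<in> Z" "b \<in> Z" using u w by auto
      moreover have "x \<in> {a,b} \<or> y \<in> {a,b}" using xy(3) ab(5,6) by (auto simp: k4e_edges_def doubleton_eq_iff)
      ultimately show False using xy XYZ(2) by auto
    qed
    then have "a\<in>Y" "b\<in>Y" "c\<in>Y" "d\<in>Y" using cd ab XYZ(1) by auto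
    then show ?thesis using ab by (auto simp: k4e_edges_def)
  qed
  have "k4e_design 6 Y B'"
    unfolding k4e_design_def
  proof (intro conjI ballI impI)
    show "finite Y" "card Y = 6" by (fact finY, fact cY)
  next
    fix G assume G: "G \<in> B'"
    then obtain a b c d where ab: "a\<in>X" "b\<in>X" "c\<in>X" "d\<in>X" "distinct [a,b,c,d]" "G = k4e_edges a b c d"
      using blk unfolding is_k4e_block_def B'_def by blast
    have "a\<in>Y" "b\<in>Y" "c\<in>Y" "d\<in>Y" using G ab by (auto simp: B'_def k4e_edges_def)
    then show "is_k4e_block Y G" using ab unfolding is_k4e_block_def by blast
  next
    fix G1 G2 assume "G1 \<in> B'" "G2 \<in> B'" "G1 \<noteq> G2"
    then show "G1 \<inter> G2 = {}" using disj by (auto simp: B'_def)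
  next
    show "\<Union>B' = complete_edges Y"
    proof
      show "\<Union>B' \<subseteq> complete_edges Y"
      proof
        fix e assume "e \<in> \<Union>B'"
        then obtain G where G: "G \<in> B" "\<Union>G \<subseteq> Y" "e \<in> G" by (auto simp: B'_def)
        then have "e \<in> complete_edges X" using un by blast
        then obtain x y where "x \<noteq> y" "e = {x,y}" by (auto simp: complete_edges_def)
        then show "e \<in> complete_edges Y" using G by (auto simp: complete_edges_def)
      qed
    next
      show "complete_edges Y \<subseteq> \<Union>B'"
      proof
        fix e assume "e \<in> complete_edges Y"
        then obtain x y where xy: "x\<in>Y" "y\<in>Y" "x \<noteq> y" "e = {x,y}" by (auto simp: complete_edges_def)
        then have "e \<in> complete_edges X" using YX by (auto simp: complete_edges_def)
        then obtain G where "G\<in>B" "e \<in> G" using un by blast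
        then show "e \<in> \<Union>B'" using inY[of G x y] xy by (auto simp: B'_def)
      qed
    qed
  qed
  moreover have "B' \<subseteq> B" by (auto simp: B'_def)
  ultimately show ?thesis using YX cY by blast
qed

end
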